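(* Let $G\subset GL(V)$ be a reflection group and let $g\in G$ with $\ell(g)=\operatorname{codim}(g)$. If $h\in G$ satisfies $h\le_\ell g$, then $h\le_\perp g$.
   Context: $V$ is a finite-dimensional vector space of dimension $n$ over $\mathbb{R}$ or $\mathbb{C}$. A reflection is an element of $GL(V)$ of finite order fixing a hyperplane pointwise; a reflection group is a finite subgroup of $GL(V)$ generated by reflections. $\ell(g)$ is the minimal number of reflections of $G$ whose product is $g$ ($\ell(1)=0$). $\operatorname{codim}(g)=n-\dim\{v\in V:gv=v\}$. The reflection length order: $a\le_\ell c$ iff $\ell(a)+\ell(a^{-1}c)=\ell(c)$. The codimension order: $a\le_\perp c$ iff $\operatorname{codim}(a)+\operatorname{codim}(a^{-1}c)=\operatorname{codim}(c)$. *)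

theory Defs
  imports "HOL-Analysis.Analysis"
begin

text \<open>V = 'k^'n (n = CARD('n)), GL(V) = invertible n x n matrices over the field 'k,
  group product = matrix product (**), identity = mat 1.\<close>

definition mat_prod :: "('k::field^'n^'n) list \<Rightarrow> 'k^'n^'n" where
  "mat_prod rs = foldr (**) rs (mat 1)"

definition mat_pow :: "'k::field^'n^'n \<Rightarrow> nat \<Rightarrow> 'k^'n^'n" where
  "mat_pow A k = (((**) A) ^^ k) (mat 1)"

definition fixed_space :: "'k::field^'n^'n \<Rightarrow> ('k^'n) set" where
  "fixed_space A = {v. A *v v = v}"

definition is_reflection :: "'k::field^'n^'n \<Rightarrow> bool" where
  "is_reflection A \<longleftrightarrow> invertible A \<and> A \<noteq> mat 1 \<and> (\<exists>k>0. mat_pow A k = mat 1) \<and>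
     (\<exists>H. vec.subspace H \<and> vec.dim H = CARD('n) - 1 \<and> (\<forall>v\<in>H. A *v v = v))"

inductive_set gen_subgroup :: "('k::field^'n^'n) set \<Rightarrow> ('k^'n^'n) set" for S where
  gen_one: "mat 1 \<in> gen_subgroup S"
| gen_base: "s \<in> S \<Longrightarrow> s \<in> gen_subgroup S"
| gen_mult: "a \<in> gen_subgroup S \<Longrightarrow> b \<in> gen_subgroup S \<Longrightarrow> a ** b \<in> gen_subgroup S"
| gen_inv: "a \<in> gen_subgroup S \<Longrightarrow> matrix_inv a \<in> gen_subgroup S"

definition reflections_of :: "('k::field^'n^'n) set \<Rightarrow> ('k^'n^'n) set" where
  "reflections_of G = {r \<in> G. is_reflection r}"

definition is_reflection_group :: "('k::field^'n^'n) set \<Rightarrow> bool" where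
  "is_reflection_group G \<longleftrightarrow> finite G \<and> (\<forall>A\<in>G. invertible A) \<and> mat 1 \<in> G \<and>
     (\<forall>A\<in>G. \<forall>B\<in>G. A ** B \<in> G) \<and> (\<forall>A\<in>G. matrix_inv A \<in> G) \<and>
     G = gen_subgroup (reflections_of G)"

definition refl_length :: "('k::field^'n^'n) set \<Rightarrow> 'k^'n^'n \<Rightarrow> nat" where
  "refl_length G g = (LEAST k. \<exists>rs. length rs = k \<and> set rs \<subseteq> reflections_of G \<and> mat_prod rs = g)"

definition codim :: "'k::field^'n^'n \<Rightarrow> nat" where
  "codim A = CARD('n) - vec.dim (fixed_space A)"

definition le_ell :: "('k::field^'n^'n) set \<Rightarrow> 'k^'n^'n \<Rightarrow> 'k^'n^'n \<Rightarrow> bool" where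
  "le_ell G a c \<longleftrightarrow> refl_length G a + refl_length G (matrix_inv a ** c) = refl_length G c"

definition le_perp :: "'k::field^'n^'n \<Rightarrow> 'k^'n^'n \<Rightarrow> bool" where
  "le_perp a c \<longleftrightarrow> codim a + codim (matrix_inv a ** c) = codim c"

end

theory Submission
  imports Defs
begin

lemma minv:
  fixes A :: "'k::field^'n^'n"
  assumes "invertible A"
  shows "A ** matrix_inv A = mat 1 \<and> matrix_inv A ** A = mat 1"
  using assms unfolding invertible_def matrix_inv_def by (rule someI_ex)

lemma fixed_subspace: "vec.subspace (fixed_space (A::'k::field^'n^'n))"
  unfolding vec.subspace_def fixed_space_def
  by (simp add: matrix_vector_right_distrib vec.scale)

lemma dim_le: "vec.dim (S :: ('k::field^'n) set) \<le> CARD('n)"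
  by (rule dim_subset_UNIV_cart_gen)

lemma codim_mult:
  fixes A B :: "'k::field^'n^'n"
  shows "codim (A ** B) \<le> codim A + codim B"
proof -
  let ?S = "fixed_space A" and ?T = "fixed_space B"
  have sub: "?S \<inter> ?T \<subseteq> fixed_space (A ** B)"
    by (auto simp: fixed_space_def matrix_vector_mul_assoc[symmetric])
  have e: "vec.dim {x + y |x y. x \<in> ?S \<and> y \<in> ?T} + vec.dim (?S \<inter> ?T) = vec.dim ?S + vec.dim ?T"
    by (rule vec.dim_sums_Int[OF fixed_subspace fixed_subspace])
  have "vec.dim (?S \<inter> ?T) \<le> vec.dim (fixed_space (A ** B))"
    by (rule vec.dim_subset[OF sub])
  moreover have "vec.dim {x + y |x y. x \<in> ?S \<and> y \<in> ?T} \<le> CARD('n)" by (rule dim_le)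
  moreover have "vec.dim ?S \<le> CARD('n)" "vec.dim ?T \<le> CARD('n)" "vec.dim (fixed_space (A ** B)) \<le> CARD('n)"
    by (rule dim_le)+
  ultimately show ?thesis using e unfolding codim_def by linarith
qed

lemma codim_refl:
  fixes r :: "'k::field^'n^'n"
  assumes "is_reflection r"
  shows "codim r \<le> 1"
proof -
  obtain H where H: "vec.subspace H" "vec.dim H = CARD('n) - 1" "\<forall>v\<in>H. r *v v = v"
    using assms unfolding is_reflection_def by blast
  have "H \<subseteq> fixed_space r" using H(3) by (auto simp: fixed_space_def)
  then have "vec.dim H \<le> vec.dim (fixed_space r)" by (rule vec.dim_subset)
  then show ?thesis using H(2) unfolding codim_def by linarith
qed

lemma codim_one: "codim (mat 1 :: 'k::field^'n^'n) = 0"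
proof -
  have "fixed_space (mat 1 :: 'k::field^'n^'n) = UNIV" by (simp add: fixed_space_def)
  then show ?thesis unfolding codim_def using vec_dim_card[where 'a='k and 'n='n] by simp
qed

lemma codim_prod:
  fixes rs :: "('k::field^'n^'n) list"
  assumes "\<forall>r\<in>set rs. is_reflection r"
  shows "codim (mat_prod rs) \<le> length rs"
  using assms
proof (induction rs)
  case Nil
  then show ?case by (simp add: mat_prod_def codim_one)
next
  case (Cons r rs)
  have "codim (mat_prod (r # rs)) \<le> codim r + codim (mat_prod rs)"
    unfolding mat_prod_def by (simp add: codim_mult)
  then show ?case using Cons codim_refl[of r] by simp
qed

lemma mat_prod_append: "mat_prod (xs @ ys) = mat_prod xs ** (mat_prod ys :: 'k::field^'n^'n)"
  by (induction xs) (simp_all add: mat_prod_def matrix_mul_assoc)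

lemma mat_prod_rep: "mat_prod (concat (replicate m rs)) = mat_pow (mat_prod rs :: 'k::field^'n^'n) m"
  by (induction m) (simp_all add: mat_pow_def mat_prod_append, simp add: mat_prod_def)

lemma mat_pow_add: "mat_pow (x :: 'k::field^'n^'n) (a + b) = mat_pow x a ** mat_pow x b"
  by (induction a) (simp_all add: mat_pow_def matrix_mul_assoc)

lemma mat_pow_in:
  assumes "is_reflection_group G" "x \<in> G"
  shows "mat_pow x k \<in> G"
  using assms by (induction k) (auto simp: mat_pow_def is_reflection_group_def)

lemma mat_pow_inv:
  fixes x :: "'k::field^'n^'n"
  assumes "invertible x"
  shows "invertible (mat_pow x k)"
  using assms by (induction k) (auto simp: mat_pow_def invertible_mult intro: invertible_mult,
      auto simp: invertible_def)

lemma inv_pow: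
  fixes x :: "'k::field^'n^'n"
  assumes G: "is_reflection_group G" and x: "x \<in> G"
  shows "\<exists>m. matrix_inv x = mat_pow x m"
proof -
  have xi: "invertible x" using G x by (auto simp: is_reflection_group_def)
  have "range (mat_pow x) \<subseteq> G" using mat_pow_in[OF G x] by auto
  then have "finite (range (mat_pow x))" using G finite_subset by (auto simp: is_reflection_group_def)
  then have "\<not> inj (mat_pow x)" using finite_imageD infinite_UNIV_nat by blast
  then obtain i j where ij: "i < j" "mat_pow x i = mat_pow x j"
    unfolding inj_def by (metis linorder_neqE_nat)
  define d where "d = j - i"
  have d: "d > 0" "j = i + d" using ij by (auto simp: d_def)
  obtain P where P: "P ** mat_pow x i = mat 1"
    using mat_pow_inv[OF xi, of i] by (auto simp: invertible_def)
  have "mat_pow x i ** mat 1 = mat_pow x i ** mat_pow x d"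
    using ij(2) d(2) mat_pow_add[of x i d] by simp
  then have "P ** (mat_pow x i ** mat 1) = P ** (mat_pow x i ** mat_pow x d)" by simp
  then have pd: "mat_pow x d = mat 1" by (simp add: matrix_mul_assoc P)
  have "mat_pow x d = x ** mat_pow x (d - 1)"
    using d(1) by (cases d) (simp_all add: mat_pow_def)
  then have "x ** mat_pow x (d - 1) = mat 1" using pd by simp
  then have "matrix_inv x ** (x ** mat_pow x (d - 1)) = matrix_inv x" by simp
  then have "matrix_inv x = mat_pow x (d - 1)"
    using minv[OF xi] by (simp add: matrix_mul_assoc)
  then show ?thesis by blast
qed

lemma word_exists:
  fixes G :: "('k::field^'n^'n) set"
  assumes G: "is_reflection_group G" and x: "x \<in> G"
  shows "\<exists>rs. set rs \<subseteq> reflections_of G \<and> mat_prod rs = x"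
proof -
  have "x \<in> gen_subgroup (reflections_of G)" using G x by (simp add: is_reflection_group_def)
  then show ?thesis
  proof (induction rule: gen_subgroup.induct)
    case gen_one
    then show ?case by (intro exI[of _ "[]"]) (simp add: mat_prod_def)
  next
    case (gen_base s)
    then show ?case by (intro exI[of _ "[s]"]) (simp add: mat_prod_def)
  next
    case (gen_mult a b)
    then obtain ra rb where "set ra \<subseteq> reflections_of G" "mat_prod ra = a"
      "set rb \<subseteq> reflections_of G" "mat_prod rb = b" by blast
    then show ?case by (intro exI[of _ "ra @ rb"]) (simp add: mat_prod_append)
  next
    case (gen_inv a)
    then obtain ra where ra: "set ra \<subseteq> reflections_of G" "mat_prod ra = a" by blast
    have "a \<in> G" using gen_inv(1) G by (simp add: is_reflection_group_def)
    then obtain m where "matrix_inv a = mat_pow a m" using inv_pow[OF G] by blast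
    then show ?case using ra
      by (intro exI[of _ "concat (replicate m ra)"]) (auto simp: mat_prod_rep)
  qed
qed

lemma codim_le_length:
  fixes G :: "('k::field^'n^'n) set"
  assumes G: "is_reflection_group G" and x: "x \<in> G"
  shows "codim x \<le> refl_length G x"
proof -
  let ?P = "\<lambda>k. \<exists>rs. length rs = k \<and> set rs \<subseteq> reflections_of G \<and> mat_prod rs = x"
  obtain rs where "set rs \<subseteq> reflections_of G \<and> mat_prod rs = x" using word_exists[OF G x] by blast
  then have "?P (length rs)" by blast
  then have "?P (Least ?P)" by (rule LeastI)
  then obtain ws where ws: "length ws = refl_length G x" "set ws \<subseteq> reflections_of G" "mat_prod ws = x"
    unfolding refl_length_def by blast
  have "\<forall>r\<in>set ws. is_reflection r" using ws(2) by (auto simp: reflections_of_def)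
  from codim_prod[OF this] ws show ?thesis by simp
qed

lemma main_gen:
  fixes G :: "('k::field^'n^'n) set"
  assumes G: "is_reflection_group G" and g: "g \<in> G" and eq: "refl_length G g = codim g"
    and h: "h \<in> G" and le: "le_ell G h g"
  shows "le_perp h g"
proof -
  have hi: "invertible h" using G h by (auto simp: is_reflection_group_def)
  have k: "matrix_inv h ** g \<in> G" using G h g by (auto simp: is_reflection_group_def)
  have "g = h ** (matrix_inv h ** g)"
    using minv[OF hi] by (metis matrix_mul_assoc matrix_mul_lid)
  then have "codim g \<le> codim h + codim (matrix_inv h ** g)"
    using codim_mult[of h "matrix_inv h ** g"] by simp
  moreover have "codim h \<le> refl_length G h" by (rule codim_le_length[OF G h])
  moreover have "codim (matrix_inv h ** g) \<le> refl_length G (matrix_inv h ** g)"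
    by (rule codim_le_length[OF G k])
  ultimately show ?thesis using le eq unfolding le_ell_def le_perp_def by linarith
qed

theorem mainTheorem3:
  shows "(\<forall>(G :: (real^'n^'n) set) g h.
            is_reflection_group G \<and> g \<in> G \<and> refl_length G g = codim g \<and>
            h \<in> G \<and> le_ell G h g \<longrightarrow> le_perp h g) \<and>
         (\<forall>(G :: (complex^'n^'n) set) g h.
            is_reflection_group G \<and> g \<in> G \<and> refl_length G g = codim g \<and>
            h \<in> G \<and> le_ell G h g \<longrightarrow> le_perp h g)"
  apply (intro conjI allI impI)
   apply (rule main_gen; blast)
  apply (rule main_gen; blast)
  done

end
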